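(* There exist a financial system $S$ in the base model (all contracts of the same priority) and banks $u\neq v$ with a debt contract from $u$ to $v$ of positive weight, such that: $S$ has exactly one solution $r$; the system $S'$ obtained from $S$ by deleting this debt contract (everything else unchanged) has exactly one solution $r'$; and $q'_v(r')>q_v(r)$, where $q_v$ and $q'_v$ denote the payoff of $v$ in $S$ and $S'$, respectively.
   Context: A financial system with payment priorities consists of: a finite set $V$ of banks; external assets $e_v\ge 0$ for each $v\in V$; a number $P\ge 1$ of priority levels; and a finite set of contracts, each of which is either a debt contract from a debtor $u$ to a creditor $v\neq u$ with weight $c>0$, or a credit default swap (CDS) from a debtor $u$ to a creditor $v\neq u$ in reference to a bank $w\notin\{u,v\}$ (the reference entity) with weight $c>0$. Every contract has a priority in $\{1,\dots,P\}$ (1 is the highest priority). It is assumed that every bank that is the reference entity of some CDS is the debtor of at least one debt contract of positive weight. Given a recovery rate vector $r\in[0,1]^V$: the liability of a contract $k$ is $l_k(r)=c$ if $k$ is a debt of weight $c$, and $l_k(r)=c\,(1-r_w)$ if $k$ is a CDS of weight $c$ in reference to $w$. For a bank $v$, $l_v(r)$ is the sum of the liabilities of the contracts with debtor $v$; $l_v^{(\rho)}(r)$ is the sum of the liabilities of contracts with debtor $v$ and priority $\rho$; and $l_v^{(\le\rho)}(r)=\sum_{i=1}^{\rho}l_v^{(i)}(r)$ (with $l_v^{(\le 0)}=0$). The payment on a contract $k$ with debtor $v$ and priority $\rho$ is $p_k(r)=l_k(r)\cdot\min\{1,\max\{0,(r_v l_v(r)-l_v^{(\le\rho-1)}(r))/l_v^{(\rho)}(r)\}\}$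 (and $p_k(r)=0$ if $l_v^{(\rho)}(r)=0$). The assets of $v$ are $a_v(r)=e_v+\sum_k p_k(r)$, summing over contracts $k$ with creditor $v$. A vector $r\in[0,1]^V$ is a solution (clearing vector) if for every $v\in V$: $r_v=1$ when $a_v(r)\ge l_v(r)$, and $r_v=a_v(r)/l_v(r)$ when $a_v(r)<l_v(r)$. The payoff of $v$ is $q_v(r)=\max\{a_v(r)-l_v(r),0\}$. When $P=1$, payments reduce to $p_k(r)=r_v\,l_k(r)$ (principle of proportionality); this is called the base model. *)

theory Defs
  imports Complex_Main
begin

text \<open>Contracts: Debt debtor creditor weight priority;
  CDS debtor creditor reference weight priority.\<close>
datatype 'b contract =
    Debt 'b 'b real nat
  | CDS 'b 'b 'b real nat

fun debtor :: "'b contract \<Rightarrow> 'b" where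
  "debtor (Debt u v c p) = u" | "debtor (CDS u v w c p) = u"
fun creditor :: "'b contract \<Rightarrow> 'b" where
  "creditor (Debt u v c p) = v" | "creditor (CDS u v w c p) = v"
fun weight :: "'b contract \<Rightarrow> real" where
  "weight (Debt u v c p) = c" | "weight (CDS u v w c p) = c"
fun prio :: "'b contract \<Rightarrow> nat" where
  "prio (Debt u v c p) = p" | "prio (CDS u v w c p) = p"

record ('b, 'k) fsys =
  banks :: "'b set"
  ext :: "'b \<Rightarrow> real"
  prios :: nat
  cids :: "'k set"
  ctr :: "'k \<Rightarrow> 'b contract"

definition valid_contract :: "('b,'k) fsys \<Rightarrow> 'b contract \<Rightarrow> bool" where
  "valid_contract S c \<longleftrightarrow>
     (case c of
        Debt u v w p \<Rightarrow> u \<in> banks S \<and> v \<in> banks S \<and> u \<noteq> v \<and> w > 0 \<and> 1 \<le> p \<and> p \<le> prios S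
      | CDS u v x w p \<Rightarrow> u \<in> banks S \<and> v \<in> banks S \<and> x \<in> banks S \<and> u \<noteq> v
           \<and> x \<noteq> u \<and> x \<noteq> v \<and> w > 0 \<and> 1 \<le> p \<and> p \<le> prios S)"

definition valid_system :: "('b,'k) fsys \<Rightarrow> bool" where
  "valid_system S \<longleftrightarrow>
     finite (banks S) \<and> (\<forall>v\<in>banks S. ext S v \<ge> 0) \<and> prios S \<ge> 1 \<and> finite (cids S)
     \<and> (\<forall>k\<in>cids S. valid_contract S (ctr S k))
     \<and> (\<forall>k\<in>cids S. \<forall>u v x w p. ctr S k = CDS u v x w p \<longrightarrow>
          (\<exists>k'\<in>cids S. \<exists>v' w' p'. ctr S k' = Debt x v' w' p' \<and> w' > 0))"

definition base_model :: "('b,'k) fsys \<Rightarrow> bool" where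
  "base_model S \<longleftrightarrow> valid_system S \<and> prios S = 1"

fun liab_c :: "('b \<Rightarrow> real) \<Rightarrow> 'b contract \<Rightarrow> real" where
  "liab_c r (Debt u v c p) = c"
| "liab_c r (CDS u v w c p) = c * (1 - r w)"

definition liab :: "('b,'k) fsys \<Rightarrow> ('b \<Rightarrow> real) \<Rightarrow> 'k \<Rightarrow> real" where
  "liab S r k = liab_c r (ctr S k)"

definition lbank :: "('b,'k) fsys \<Rightarrow> ('b \<Rightarrow> real) \<Rightarrow> 'b \<Rightarrow> real" where
  "lbank S r v = (\<Sum>k\<in>{k\<in>cids S. debtor (ctr S k) = v}. liab S r k)"

definition lprio :: "('b,'k) fsys \<Rightarrow> ('b \<Rightarrow> real) \<Rightarrow> 'b \<Rightarrow> nat \<Rightarrow> real" where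
  "lprio S r v \<rho> = (\<Sum>k\<in>{k\<in>cids S. debtor (ctr S k) = v \<and> prio (ctr S k) = \<rho>}. liab S r k)"

definition lle :: "('b,'k) fsys \<Rightarrow> ('b \<Rightarrow> real) \<Rightarrow> 'b \<Rightarrow> nat \<Rightarrow> real" where
  "lle S r v \<rho> = (\<Sum>i\<in>{1..\<rho>}. lprio S r v i)"

definition pay :: "('b,'k) fsys \<Rightarrow> ('b \<Rightarrow> real) \<Rightarrow> 'k \<Rightarrow> real" where
  "pay S r k =
    (let v = debtor (ctr S k); \<rho> = prio (ctr S k) in
     if lprio S r v \<rho> = 0 then 0
     else liab S r k * min 1 (max 0 ((r v * lbank S r v - lle S r v (\<rho> - 1)) / lprio S r v \<rho>)))"

definition assets :: "('b,'k) fsys \<Rightarrow> ('b \<Rightarrow> real) \<Rightarrow> 'b \<Rightarrow> real" where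
  "assets S r v = ext S v + (\<Sum>k\<in>{k\<in>cids S. creditor (ctr S k) = v}. pay S r k)"

definition is_solution :: "('b,'k) fsys \<Rightarrow> ('b \<Rightarrow> real) \<Rightarrow> bool" where
  "is_solution S r \<longleftrightarrow>
     (\<forall>v\<in>banks S. 0 \<le> r v \<and> r v \<le> 1
        \<and> (assets S r v \<ge> lbank S r v \<longrightarrow> r v = 1)
        \<and> (assets S r v < lbank S r v \<longrightarrow> r v = assets S r v / lbank S r v))"

definition unique_solution :: "('b,'k) fsys \<Rightarrow> ('b \<Rightarrow> real) \<Rightarrow> bool" where
  "unique_solution S r \<longleftrightarrow> is_solution S r \<and>
     (\<forall>r'. is_solution S r' \<longrightarrow> (\<forall>v\<in>banks S. r' v = r v))"

definition payoff :: "('b,'k) fsys \<Rightarrow> ('b \<Rightarrow> real) \<Rightarrow> 'b \<Rightarrow> real" where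
  "payoff S r v = max (assets S r v - lbank S r v) 0"

definition delete_contract :: "('b,'k) fsys \<Rightarrow> 'k \<Rightarrow> ('b,'k) fsys" where
  "delete_contract S k = S\<lparr>cids := cids S - {k}\<rparr>"

end

theory Submission
  imports Defs
begin

definition S0 :: "(nat,nat) fsys" where
  "S0 = \<lparr>banks = {0,1,2}, ext = (\<lambda>v. if v = 0 then 1 else if v = 1 then 10 else 0),
         prios = 1, cids = {0,1,2},
         ctr = (\<lambda>k. if k = 0 then Debt 0 1 1 1 else if k = 1 then Debt 0 2 1 1 else CDS 1 2 0 10 1)\<rparr>"

definition S1 :: "(nat,nat) fsys" where "S1 = delete_contract S0 0"

lemma S1_simps: "banks S1 = {0,1,2}" "cids S1 = {1,2}" "ctr S1 = ctr S0" "ext S1 = ext S0"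
  by (auto simp: S1_def delete_contract_def S0_def)

lemma base: "base_model S0"
  unfolding base_model_def valid_system_def valid_contract_def S0_def by auto

lemma setsA:
  "{k\<in>cids S0. debtor (ctr S0 k) = 0} = {0,1}"
  "{k\<in>cids S0. debtor (ctr S0 k) = 1} = {2}"
  "{k\<in>cids S0. debtor (ctr S0 k) = 2} = {}"
  "{k\<in>cids S0. debtor (ctr S0 k) = 0 \<and> prio (ctr S0 k) = 1} = {0,1}"
  "{k\<in>cids S0. debtor (ctr S0 k) = 1 \<and> prio (ctr S0 k) = 1} = {2}"
  "{k\<in>cids S0. creditor (ctr S0 k) = 0} = {}"
  "{k\<in>cids S0. creditor (ctr S0 k) = 1} = {0}"
  "{k\<in>cids S0. creditor (ctr S0 k) = 2} = {1,2}"
  by (auto simp: S0_def)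

lemma setsB:
  "{k\<in>cids S1. debtor (ctr S1 k) = 0} = {1}"
  "{k\<in>cids S1. debtor (ctr S1 k) = 1} = {2}"
  "{k\<in>cids S1. debtor (ctr S1 k) = 2} = {}"
  "{k\<in>cids S1. debtor (ctr S1 k) = 0 \<and> prio (ctr S1 k) = 1} = {1}"
  "{k\<in>cids S1. debtor (ctr S1 k) = 1 \<and> prio (ctr S1 k) = 1} = {2}"
  "{k\<in>cids S1. creditor (ctr S1 k) = 0} = {}"
  "{k\<in>cids S1. creditor (ctr S1 k) = 1} = {}"
  "{k\<in>cids S1. creditor (ctr S1 k) = 2} = {1,2}"
  by (auto simp: S1_simps S0_def)

lemma ctrs: "ctr S0 0 = Debt 0 1 1 1" "ctr S0 1 = Debt 0 2 1 1" "ctr S0 2 = CDS 1 2 0 10 1"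
  "ext S0 0 = 1" "ext S0 1 = 10" "ext S0 2 = 0"
  "ctr S0 (Suc 0) = Debt 0 2 1 1" "ext S0 (Suc 0) = 10"
  by (auto simp: S0_def)

lemma A_lb:
  "lbank S0 r 0 = 2" "lbank S0 r 1 = 10 * (1 - r 0)" "lbank S0 r 2 = 0" "lbank S0 r (Suc 0) = 10 * (1 - r 0)"
  unfolding One_nat_def[symmetric] lbank_def setsA by (simp_all add: liab_def ctrs)

lemma A_lp:
  "lprio S0 r 0 1 = 2" "lprio S0 r 1 1 = 10 * (1 - r 0)"
  "lprio S0 r 0 (Suc 0) = 2" "lprio S0 r (Suc 0) (Suc 0) = 10 * (1 - r 0)"
  unfolding One_nat_def[symmetric] lprio_def setsA lprio_def setsA by (simp_all add: liab_def ctrs)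

lemma A_pay:
  "pay S0 r 0 = min 1 (max 0 (r 0))" "pay S0 r 1 = min 1 (max 0 (r 0))"
  "0 \<le> r 0 \<Longrightarrow> r 0 \<le> 1 \<Longrightarrow> 0 \<le> r 1 \<Longrightarrow> r 1 \<le> 1 \<Longrightarrow> pay S0 r 2 \<ge> 0"
  by (auto simp add: pay_def A_lb A_lp lle_def liab_def ctrs)


lemma A_as:
  "assets S0 r 0 = 1" "assets S0 r 1 = 10 + min 1 (max 0 (r 0))"
  "assets S0 r (Suc 0) = 10 + min 1 (max 0 (r 0))"
  "assets S0 r 2 = pay S0 r 1 + pay S0 r 2"
  unfolding One_nat_def[symmetric] assets_def setsA by (simp_all add: ctrs A_pay)

lemma banks0: "banks S0 = {0,1,2}" by (simp add: S0_def)

lemma sol0: "is_solution S0 r \<Longrightarrow> r 0 = 1/2 \<and> r 1 = 1 \<and> r 2 = 1"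
proof -
  assume h: "is_solution S0 r"
  have h0: "0 \<le> r 0 \<and> r 0 \<le> 1 \<and> (assets S0 r 0 \<ge> lbank S0 r 0 \<longrightarrow> r 0 = 1)
        \<and> (assets S0 r 0 < lbank S0 r 0 \<longrightarrow> r 0 = assets S0 r 0 / lbank S0 r 0)"
    using h unfolding is_solution_def banks0 by blast
  have h1: "0 \<le> r 1 \<and> r 1 \<le> 1 \<and> (assets S0 r 1 \<ge> lbank S0 r 1 \<longrightarrow> r 1 = 1)"
    using h unfolding is_solution_def banks0 by blast
  have h2: "0 \<le> r 2 \<and> r 2 \<le> 1 \<and> (assets S0 r 2 \<ge> lbank S0 r 2 \<longrightarrow> r 2 = 1)"
    using h unfolding is_solution_def banks0 by blast
  have r0: "r 0 = 1/2" using h0 by (simp add: A_as A_lb)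
  have r1: "r 1 = 1" using h1 r0 by (simp add: A_as A_lb)
  have "pay S0 r 2 \<ge> 0" using h0 h1 by (intro A_pay) auto
  then have r2: "r 2 = 1" using h2 r0 by (simp add: A_as A_lb A_pay A_pay(2)[unfolded One_nat_def])
  show ?thesis using r0 r1 r2 by simp
qed

definition R0 :: "nat \<Rightarrow> real" where "R0 = (\<lambda>v. if v = 0 then 1/2 else 1)"

lemma sol0e: "is_solution S0 R0"
proof -
  have "pay S0 (\<lambda>v. if v = 0 then 1/2 else 1) 2 \<ge> 0" (is "?p") by (intro A_pay) auto
  then show ?thesis unfolding is_solution_def banks0 R0_def
    by (auto simp: A_as A_lb A_pay A_pay(2)[unfolded One_nat_def]) (use \<open>?p\<close> in linarith)
qed

lemma uniq0: "unique_solution S0 R0"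
  unfolding unique_solution_def using sol0e sol0 by (auto simp: banks0 R0_def)

lemma ctrs1: "ctr S1 1 = Debt 0 2 1 1" "ctr S1 2 = CDS 1 2 0 10 1"
  "ext S1 0 = 1" "ext S1 1 = 10" "ext S1 2 = 0"
  "ctr S1 (Suc 0) = Debt 0 2 1 1" "ext S1 (Suc 0) = 10"
  by (auto simp: S1_simps ctrs)

lemma B_lb:
  "lbank S1 r 0 = 1" "lbank S1 r 1 = 10 * (1 - r 0)" "lbank S1 r 2 = 0" "lbank S1 r (Suc 0) = 10 * (1 - r 0)"
  unfolding One_nat_def[symmetric] lbank_def setsB by (simp_all add: liab_def ctrs1)

lemma B_lp:
  "lprio S1 r 0 1 = 1" "lprio S1 r 1 1 = 10 * (1 - r 0)"
  "lprio S1 r 0 (Suc 0) = 1" "lprio S1 r (Suc 0) (Suc 0) = 10 * (1 - r 0)"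
  unfolding One_nat_def[symmetric] lprio_def setsB by (simp_all add: liab_def ctrs1)

lemma B_pay:
  "pay S1 r 1 = min 1 (max 0 (r 0))"
  "0 \<le> r 0 \<Longrightarrow> r 0 \<le> 1 \<Longrightarrow> 0 \<le> r 1 \<Longrightarrow> r 1 \<le> 1 \<Longrightarrow> pay S1 r 2 \<ge> 0"
  by (auto simp add: pay_def B_lb B_lp lle_def liab_def ctrs1)

lemma B_as:
  "assets S1 r 0 = 1" "assets S1 r 1 = 10" "assets S1 r (Suc 0) = 10"
  "assets S1 r 2 = pay S1 r 1 + pay S1 r 2"
  unfolding One_nat_def[symmetric] assets_def setsB by (simp_all add: ctrs1 B_pay)

lemma sol1: "is_solution S1 r \<Longrightarrow> r 0 = 1 \<and> r 1 = 1 \<and> r 2 = 1"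
proof -
  assume h: "is_solution S1 r"
  have h0: "0 \<le> r 0 \<and> r 0 \<le> 1 \<and> (assets S1 r 0 \<ge> lbank S1 r 0 \<longrightarrow> r 0 = 1)"
    using h unfolding is_solution_def S1_simps by blast
  have h1: "0 \<le> r 1 \<and> r 1 \<le> 1 \<and> (assets S1 r 1 \<ge> lbank S1 r 1 \<longrightarrow> r 1 = 1)"
    using h unfolding is_solution_def S1_simps by blast
  have h2: "0 \<le> r 2 \<and> r 2 \<le> 1 \<and> (assets S1 r 2 \<ge> lbank S1 r 2 \<longrightarrow> r 2 = 1)"
    using h unfolding is_solution_def S1_simps by blast
  have r0: "r 0 = 1" using h0 by (simp add: B_as B_lb)
  have r1: "r 1 = 1" using h1 r0 by (simp add: B_as B_lb)
  have "pay S1 r 2 \<ge> 0" using h0 h1 by (intro B_pay) auto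
  then have r2: "r 2 = 1" using h2 r0 by (simp add: B_as B_lb B_pay B_pay(1)[unfolded One_nat_def])
  show ?thesis using r0 r1 r2 by simp
qed

definition R1 :: "nat \<Rightarrow> real" where "R1 = (\<lambda>v. 1)"

lemma sol1e: "is_solution S1 R1"
proof -
  have "pay S1 (\<lambda>v. 1) 2 \<ge> 0" (is "?p") by (intro B_pay) auto
  then show ?thesis unfolding is_solution_def S1_simps R1_def
    by (auto simp: B_as B_lb B_pay B_pay(1)[unfolded One_nat_def]) (use \<open>?p\<close> in linarith)
qed

lemma uniq1: "unique_solution S1 R1"
  unfolding unique_solution_def using sol1e sol1 by (auto simp: S1_simps R1_def)

theorem mainTheorem2:
  shows "\<exists>(S :: (nat, nat) fsys) u v k c p r r'.
     base_model S \<and> u \<noteq> v \<and> k \<in> cids S \<and> ctr S k = Debt u v c p \<and> c > 0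
     \<and> unique_solution S r
     \<and> unique_solution (delete_contract S k) r'
     \<and> payoff (delete_contract S k) r' v > payoff S r v"
proof -
  have "payoff S1 R1 1 > payoff S0 R0 1"
    by (simp add: payoff_def A_as A_lb B_as B_lb R0_def R1_def)
  then show ?thesis
    using base uniq0 uniq1[unfolded S1_def]
    by (intro exI[of _ S0] exI[of _ 0] exI[of _ 1] exI[of _ 0] exI[of _ 1] exI[of _ 1]
        exI[of _ R0] exI[of _ R1]) (auto simp: ctrs S1_def S0_def)
qed

end
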